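(* Let $\Gamma$ be a group with finite symmetric generating set $S$ acting by measure-preserving transformations on a standard probability space $(Z,\mu)$, and suppose the action is hyperfinite. Then for $\mu$-almost every $z\in Z$, the Schreier graph of the action of $\Gamma$ on the orbit $\Gamma z$ (with respect to $S$) contains a hyperfinite Følner sequence; i.e. the action of $\Gamma$ on almost every orbit is hyperfinite.
   Context: A p.m.p. action is hyperfinite if its orbit equivalence relation is, up to a null set, an ascending union of finite measurable equivalence relations. The Schreier graph of the action on an orbit $O$ has vertex set $O$ and an edge $\{x,y\}$ when $x\neq y$ and $s(x)=y$ for some $s\in S$. A Følner sequence in a graph is a sequence of finite induced subgraphs $F_n$ whose isoperimetric constant (number of edges leaving $F_n$ divided by $|V(F_n)|$) tends to $0$. A sequence $(G_n)$ of finite bounded-degree graphs is hyperfinite if for every $\varepsilon>0$ there is $K$ such that for every $n$ one can delete at most $\varepsilon|V(G_n)|$ edges of $G_n$ leaving components of at most $K$ vertices. *)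

theory Defs
  imports "HOL-Probability.Probability" "HOL-Algebra.Generated_Groups"
begin

definition pmp_action :: "('g, 'b) monoid_scheme \<Rightarrow> 'z measure \<Rightarrow> ('g \<Rightarrow> 'z \<Rightarrow> 'z) \<Rightarrow> bool" where
  "pmp_action G M act \<longleftrightarrow>
     group G \<and> prob_space M \<and>
     (\<forall>x\<in>space M. act \<one>\<^bsub>G\<^esub> x = x) \<and>
     (\<forall>g\<in>carrier G. \<forall>h\<in>carrier G. \<forall>x\<in>space M. act (g \<otimes>\<^bsub>G\<^esub> h) x = act g (act h x)) \<and>
     (\<forall>g\<in>carrier G. act g \<in> measurable M M \<and> distr M M (act g) = M)"

definition orbit_rel :: "('g, 'b) monoid_scheme \<Rightarrow> 'z measure \<Rightarrow> ('g \<Rightarrow> 'z \<Rightarrow> 'z) \<Rightarrow> ('z \<times> 'z) set" where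
  "orbit_rel G M act = {(x, act g x) | x g. x \<in> space M \<and> g \<in> carrier G}"

definition orbit :: "('g, 'b) monoid_scheme \<Rightarrow> ('g \<Rightarrow> 'z \<Rightarrow> 'z) \<Rightarrow> 'z \<Rightarrow> 'z set" where
  "orbit G act z = (\<lambda>g. act g z) ` carrier G"

definition finite_measurable_equiv :: "'z measure \<Rightarrow> ('z \<times> 'z) set \<Rightarrow> bool" where
  "finite_measurable_equiv M F \<longleftrightarrow>
     equiv (space M) F \<and> F \<in> sets (M \<Otimes>\<^sub>M M) \<and> (\<forall>x\<in>space M. finite (F `` {x}))"

definition hyperfinite_action :: "('g, 'b) monoid_scheme \<Rightarrow> 'z measure \<Rightarrow> ('g \<Rightarrow> 'z \<Rightarrow> 'z) \<Rightarrow> bool" where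
  "hyperfinite_action G M act \<longleftrightarrow>
     (\<exists>N F. N \<in> null_sets M \<and> (\<forall>n. finite_measurable_equiv M (F n)) \<and>
        (\<forall>n. F n \<subseteq> F (Suc n)) \<and>
        (\<forall>x\<in>space M - N. \<forall>y\<in>space M - N.
            (x, y) \<in> orbit_rel G M act \<longleftrightarrow> (\<exists>n. (x, y) \<in> F n)))"

definition schreier_edges :: "'g set \<Rightarrow> ('g \<Rightarrow> 'z \<Rightarrow> 'z) \<Rightarrow> 'z set \<Rightarrow> 'z set set" where
  "schreier_edges S act Orb = {{x, act s x} | x s. x \<in> Orb \<and> s \<in> S \<and> act s x \<noteq> x}"

definition induced_edges :: "'z set set \<Rightarrow> 'z set \<Rightarrow> 'z set set" where
  "induced_edges E V = {e \<in> E. e \<subseteq> V}"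

definition boundary_edges :: "'z set set \<Rightarrow> 'z set \<Rightarrow> 'z set set" where
  "boundary_edges E V = {e \<in> E. card (e \<inter> V) = 1}"

definition iso_const :: "'z set set \<Rightarrow> 'z set \<Rightarrow> real" where
  "iso_const E V = real (card (boundary_edges E V)) / real (card V)"

definition folner_seq :: "'z set \<Rightarrow> 'z set set \<Rightarrow> (nat \<Rightarrow> 'z set) \<Rightarrow> bool" where
  "folner_seq Orb E Fn \<longleftrightarrow>
     (\<forall>n. finite (Fn n) \<and> Fn n \<noteq> {} \<and> Fn n \<subseteq> Orb) \<and>
     (\<lambda>n. iso_const E (Fn n)) \<longlonglongrightarrow> 0"

definition component :: "'z set set \<Rightarrow> 'z \<Rightarrow> 'z set" where
  "component E v = {(x, y). {x, y} \<in> E}\<^sup>* `` {v}"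

definition hyperfinite_graph_seq :: "(nat \<Rightarrow> 'z set) \<Rightarrow> (nat \<Rightarrow> 'z set set) \<Rightarrow> bool" where
  "hyperfinite_graph_seq V E \<longleftrightarrow>
     (\<forall>\<epsilon>>0. \<exists>K::nat. \<forall>n. \<exists>D. D \<subseteq> E n \<and> real (card D) \<le> \<epsilon> * real (card (V n)) \<and>
        (\<forall>v\<in>V n. card (component (E n - D) v) \<le> K))"

definition has_hyperfinite_folner :: "'g set \<Rightarrow> ('g \<Rightarrow> 'z \<Rightarrow> 'z) \<Rightarrow> 'z set \<Rightarrow> bool" where
  "has_hyperfinite_folner S act Orb \<longleftrightarrow>
     (\<exists>Fn. folner_seq Orb (schreier_edges S act Orb) Fn \<and>
        hyperfinite_graph_seq Fn (\<lambda>n. induced_edges (schreier_edges S act Orb) (Fn n)))"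

end

theory Submission
  imports Defs
begin


lemma generate_countable:
  assumes "countable H"
  shows "countable (generate G H)"
proof -
  define W where "W = rec_nat ({\<one>\<^bsub>G\<^esub>} \<union> H \<union> (\<lambda>h. inv\<^bsub>G\<^esub> h) ` H)
      (\<lambda>_ A. A \<union> (\<lambda>(a,b). a \<otimes>\<^bsub>G\<^esub> b) ` (A \<times> A))"
  have W0: "W 0 = {\<one>\<^bsub>G\<^esub>} \<union> H \<union> (\<lambda>h. inv\<^bsub>G\<^esub> h) ` H" by (simp add: W_def)
  have WS: "W (Suc n) = W n \<union> (\<lambda>(a,b). a \<otimes>\<^bsub>G\<^esub> b) ` (W n \<times> W n)" for n by (simp add: W_def)
  have cW: "countable (W n)" for n
    by (induction n) (use assms in \<open>auto simp: W0 WS\<close>)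
  have mono: "W a \<subseteq> W b" if "a \<le> b" for a b
    using that proof (induction b)
    case 0 then show ?case by simp
  next
    case (Suc b) then show ?case by (cases "a = Suc b") (auto simp: WS)
  qed
  have "h \<in> (\<Union>n. W n)" if "h \<in> generate G H" for h
    using that
  proof (induction)
    case one then show ?case by (auto simp: W0 intro: exI[of _ 0])
  next
    case (incl h) then show ?case by (auto simp: W0 intro: exI[of _ 0])
  next
    case (inv h) then show ?case by (auto simp: W0 intro: exI[of _ 0])
  next
    case (eng h1 h2)
    then obtain a b where "h1 \<in> W a" "h2 \<in> W b" by auto
    then have "h1 \<in> W (max a b)" "h2 \<in> W (max a b)" using mono[of a "max a b"] mono[of b "max a b"] by auto
    then have "h1 \<otimes>\<^bsub>G\<^esub> h2 \<in> W (Suc (max a b))" by (auto simp: WS)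
    then show ?case by blast
  qed
  then have "generate G H \<subseteq> (\<Union>n. W n)" by blast
  moreover have "countable (\<Union>n. W n)" using cW by auto
  ultimately show ?thesis using countable_subset by blast
qed



lemma sum_indicator_card_enn:
  assumes "finite A"
  shows "(\<Sum>s\<in>A. indicator (B s) y :: ennreal) = of_nat (card {s\<in>A. y \<in> B s})"
  using assms
proof (induction A rule: finite_induct)
  case empty then show ?case by simp
next
  case (insert a A)
  have "{s \<in> insert a A. y \<in> B s} = (if y \<in> B a then insert a {s\<in>A. y \<in> B s} else {s\<in>A. y \<in> B s})" by auto
  moreover have "a \<notin> {s\<in>A. y \<in> B s}" using insert by auto
  ultimately show ?case using insert by (auto simp: indicator_def add.commute)
qed

lemma tendsto_zero_pick:
  fixes a :: "nat \<Rightarrow> ennreal"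
  assumes "a \<longlonglongrightarrow> 0"
  shows "\<exists>r. \<forall>i. a (r i) < ennreal ((1/4)^i)"
proof -
  have "\<exists>n. a n < ennreal ((1/4)^i)" for i
  proof -
    have "eventually (\<lambda>n. a n < ennreal ((1/4)^i)) sequentially"
      by (rule order_tendstoD(2)[OF assms]) simp
    then show ?thesis by (auto simp: eventually_sequentially)
  qed
  then show ?thesis by metis
qed


locale hf =
  fixes G :: "('g, 'b) monoid_scheme" and S :: "'g set" and M :: "'z::polish_space measure"
    and act :: "'g \<Rightarrow> 'z \<Rightarrow> 'z" and gg :: "nat \<Rightarrow> 'g" and N :: "'z set" and F :: "nat \<Rightarrow> ('z \<times> 'z) set"
  assumes grp: "group G" and finS: "finite S" and SG: "S \<subseteq> carrier G"
    and Sinv: "\<forall>s\<in>S. inv\<^bsub>G\<^esub> s \<in> S"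
    and ps: "prob_space M" and setsM: "sets M = sets borel"
    and pmp: "pmp_action G M act"
    and enum: "range gg = carrier G"
    and Nnull: "N \<in> null_sets M"
    and Feq: "\<And>n. finite_measurable_equiv M (F n)" and Fmono: "\<And>n. F n \<subseteq> F (Suc n)"
    and Forb: "\<forall>x\<in>space M - N. \<forall>y\<in>space M - N. (x, y) \<in> orbit_rel G M act \<longleftrightarrow> (\<exists>n. (x, y) \<in> F n)"
begin

lemma spM: "space M = UNIV"
  using sets_eq_imp_space_eq[OF setsM] by simp

lemma gg_in[simp]: "gg i \<in> carrier G" using enum by auto

lemma act_meas: "g \<in> carrier G \<Longrightarrow> act g \<in> measurable M M"
  using pmp by (auto simp: pmp_action_def)

lemma act_borel: "g \<in> carrier G \<Longrightarrow> act g \<in> borel_measurable M"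
  using act_meas measurable_cong_sets[OF refl setsM] by blast

lemma act_distr: "g \<in> carrier G \<Longrightarrow> distr M M (act g) = M"
  using pmp by (auto simp: pmp_action_def)

lemma act_one[simp]: "act \<one>\<^bsub>G\<^esub> x = x"
  using pmp spM by (auto simp: pmp_action_def)

lemma act_mult: "g \<in> carrier G \<Longrightarrow> h \<in> carrier G \<Longrightarrow> act (g \<otimes>\<^bsub>G\<^esub> h) x = act g (act h x)"
  using pmp spM by (auto simp: pmp_action_def)

lemma act_inv: "g \<in> carrier G \<Longrightarrow> act (inv\<^bsub>G\<^esub> g) (act g x) = x"
  using act_mult[of "inv\<^bsub>G\<^esub> g" g x] grp by (simp add: group.l_inv group.inv_closed)

lemma act_inv2: "g \<in> carrier G \<Longrightarrow> act g (act (inv\<^bsub>G\<^esub> g) x) = x"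
  using act_mult[of g "inv\<^bsub>G\<^esub> g" x] grp by (simp add: group.r_inv group.inv_closed)

lemma sets_eq_act: "a \<in> carrier G \<Longrightarrow> b \<in> carrier G \<Longrightarrow> {x. act a x = act b x} \<in> sets M"
  using measurable_equality_set[OF act_borel act_borel, of a b] spM by simp

lemma pair_meas: "g \<in> carrier G \<Longrightarrow> (\<lambda>x. (x, act g x)) \<in> measurable M (M \<Otimes>\<^sub>M M)"
  by (intro measurable_Pair measurable_ident_sets act_meas) auto

lemma sets_pair_in: "g \<in> carrier G \<Longrightarrow> R \<in> sets (M \<Otimes>\<^sub>M M) \<Longrightarrow> {x. (x, act g x) \<in> R} \<in> sets M"
  using measurable_sets[OF pair_meas, of g R] spM by (simp add: vimage_def)

lemma sets_act_in: "g \<in> carrier G \<Longrightarrow> A \<in> sets M \<Longrightarrow> {x. act g x \<in> A} \<in> sets M"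
  using measurable_sets[OF act_meas, of g A] spM by (simp add: vimage_def)

lemma AE_act: assumes "g \<in> carrier G" "AE x in M. P x" "{x. P x} \<in> sets M"
  shows "AE x in M. P (act g x)"
proof -
  have "AE x in distr M M (act g). P x" by (subst act_distr[OF assms(1)]) (rule assms(2))
  then show ?thesis using AE_distr_iff[OF act_meas[OF assms(1)], of P] assms(3) spM by simp
qed

lemma nn_act: assumes "g \<in> carrier G" "f \<in> borel_measurable M"
  shows "(\<integral>\<^sup>+ x. f (act g x) \<partial>M) = (\<integral>\<^sup>+ x. f x \<partial>M)"
proof -
  have "(\<integral>\<^sup>+ x. f x \<partial>M) = (\<integral>\<^sup>+ x. f x \<partial>distr M M (act g))" using act_distr[OF assms(1)] by simp
  also have "\<dots> = (\<integral>\<^sup>+ x. f (act g x) \<partial>M)"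
    by (rule nn_integral_distr[OF act_meas[OF assms(1)]]) (use assms act_distr in simp)
  finally show ?thesis by simp
qed

lemma countable_G: "countable (carrier G)"
proof -
  have "countable (range gg)" by simp
  then show ?thesis using enum by simp
qed

definition Z0 :: "'z set" where "Z0 = {x. \<forall>i. act (gg i) x \<notin> N}"

lemma Z0_sets: "Z0 \<in> sets M"
proof -
  have "Z0 = (\<Inter>i. {x. act (gg i) x \<in> UNIV - N})" by (auto simp: Z0_def)
  moreover have "{x. act (gg i) x \<in> UNIV - N} \<in> sets M" for i
    by (rule sets_act_in) (use sets.compl_sets[OF null_setsD2[OF Nnull]] spM in auto)
  ultimately show ?thesis by auto
qed

lemma AE_Z0: "AE x in M. x \<in> Z0"
proof -
  have N': "{x. x \<notin> N} \<in> sets M" using sets.compl_sets[OF null_setsD2[OF Nnull]] spM by (simp add: Compl_eq_Diff_UNIV[symmetric] Collect_neg_eq)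
  have "AE x in M. act (gg i) x \<notin> N" for i
    by (rule AE_act[of _ "\<lambda>x. x \<notin> N"]) (use AE_not_in[OF Nnull] N' in auto)
  then have "AE x in M. \<forall>i. act (gg i) x \<notin> N" by (simp add: AE_all_countable)
  then show ?thesis by (simp add: Z0_def)
qed

lemma Z0_inv: "x \<in> Z0 \<Longrightarrow> h \<in> carrier G \<Longrightarrow> act h x \<in> Z0"
proof -
  assume x: "x \<in> Z0" and h: "h \<in> carrier G"
  have "\<forall>i. act (gg i) (act h x) \<notin> N"
  proof
    fix i
    have "gg i \<otimes>\<^bsub>G\<^esub> h \<in> carrier G" using h grp by (simp add: group.subgroupE(4) group.subgroup_self)
    then obtain j where "gg j = gg i \<otimes>\<^bsub>G\<^esub> h" using enum by (metis rangeE)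
    then have "act (gg i) (act h x) = act (gg j) x" using act_mult h by simp
    then show "act (gg i) (act h x) \<notin> N" using x by (simp add: Z0_def)
  qed
  then show "act h x \<in> Z0" by (simp add: Z0_def)
qed

lemma Z0_notN: "x \<in> Z0 \<Longrightarrow> x \<notin> N"
proof -
  assume x: "x \<in> Z0"
  have "\<one>\<^bsub>G\<^esub> \<in> carrier G" using grp by (simp add: group.is_monoid monoid.one_closed)
  then obtain i where "gg i = \<one>\<^bsub>G\<^esub>" using enum by (metis rangeE)
  then show "x \<notin> N" using x unfolding Z0_def by (metis act_one mem_Collect_eq)
qed


definition C :: "nat \<Rightarrow> 'z \<Rightarrow> 'z set" where "C n x = F n `` {x} \<inter> Z0"

lemma Feqv: "equiv UNIV (F n)" using Feq[of n] spM by (simp add: finite_measurable_equiv_def)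
lemma Fsets: "F n \<in> sets (M \<Otimes>\<^sub>M M)" using Feq[of n] by (simp add: finite_measurable_equiv_def)
lemma Ffin: "finite (F n `` {x})" using Feq[of n] spM by (simp add: finite_measurable_equiv_def)

lemma C_refl: "x \<in> Z0 \<Longrightarrow> x \<in> C n x"
  using Feqv[of n] by (auto simp: C_def equiv_def refl_on_def)

lemma C_fin: "finite (C n x)" using Ffin[of n x] by (simp add: C_def)

lemma C_sub: "C n x \<subseteq> Z0" by (auto simp: C_def)

lemma C_orb: assumes "x \<in> Z0" "y \<in> C n x" shows "\<exists>h\<in>carrier G. y = act h x"
proof -
  have "(x, y) \<in> F n" "y \<in> Z0" using assms by (auto simp: C_def)
  then have "(x, y) \<in> orbit_rel G M act"
    using Forb Z0_notN assms(1) spM by blast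
  then show ?thesis by (auto simp: orbit_rel_def)
qed

lemma C_same: assumes "y \<in> C n x" shows "C n y = C n x"
proof -
  have "(x, y) \<in> F n" using assms by (auto simp: C_def)
  then have "F n `` {y} = F n `` {x}" using Feqv[of n] by (simp add: equiv_class_eq)
  then show ?thesis by (simp add: C_def)
qed

lemma F_mono: "n \<le> m \<Longrightarrow> F n \<subseteq> F m"
  using Fmono by (simp add: lift_Suc_mono_le)

lemma C_mono: "n \<le> m \<Longrightarrow> C n x \<subseteq> C m x"
  using F_mono by (auto simp: C_def)

lemma C_exh: assumes "x \<in> Z0" "h \<in> carrier G" shows "\<exists>n. act h x \<in> C n x"
proof -
  have hx: "act h x \<in> Z0" using Z0_inv assms by blast
  have "(x, act h x) \<in> orbit_rel G M act" using assms spM by (auto simp: orbit_rel_def)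
  then obtain n where "(x, act h x) \<in> F n" using Forb Z0_notN assms(1) hx spM by blast
  then show ?thesis using hx by (auto simp: C_def)
qed

lemma sets_C: "g \<in> carrier G \<Longrightarrow> {x. act g x \<in> C n x} \<in> sets M"
proof -
  assume g: "g \<in> carrier G"
  have "{x. act g x \<in> C n x} = {x. (x, act g x) \<in> F n} \<inter> {x. act g x \<in> Z0}" by (auto simp: C_def)
  then show ?thesis using sets_pair_in[OF g Fsets] sets_act_in[OF g Z0_sets] by simp
qed

definition A :: "nat \<Rightarrow> nat \<Rightarrow> 'z set" where
  "A n i = {x \<in> Z0. act (gg i) x \<in> C n x \<and> (\<forall>j<i. act (gg j) x \<noteq> act (gg i) x)}"

lemma sets_A: "A n i \<in> sets M"
proof -
  have eqA: "A n i = Z0 \<inter> {x. act (gg i) x \<in> C n x} \<inter> (\<Inter>j\<in>{..<i}. UNIV - {x. act (gg j) x = act (gg i) x})"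
    by (auto simp: A_def)
  have c: "UNIV - {x. act (gg j) x = act (gg i) x} \<in> sets M" for j
    using sets.compl_sets[OF sets_eq_act[of "gg j" "gg i"]] spM by simp
  have d: "(\<Inter>j\<in>{..<i}. UNIV - {x. act (gg j) x = act (gg i) x}) \<in> sets M"
  proof (cases "i = 0")
    case True then show ?thesis using sets.top[of M] spM by simp
  next
    case False then show ?thesis using c by (intro sets.finite_INT) auto
  qed
  show ?thesis unfolding eqA by (intro sets.Int Z0_sets sets_C d) simp
qed

definition Sm :: "nat \<Rightarrow> ('z \<Rightarrow> ennreal) \<Rightarrow> 'z \<Rightarrow> ennreal" where
  "Sm n \<phi> x = (\<Sum>i. \<phi> (act (gg i) x) * indicator (A n i) x)"

lemma Sm_meas: "\<phi> \<in> borel_measurable M \<Longrightarrow> Sm n \<phi> \<in> borel_measurable M"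
proof -
  assume [measurable]: "\<phi> \<in> borel_measurable M"
  have [measurable]: "act (gg i) \<in> measurable M M" for i using act_meas by simp
  have [measurable]: "A n i \<in> sets M" for i by (rule sets_A)
  show ?thesis unfolding Sm_def by measurable
qed

lemma Sm_eq: assumes x: "x \<in> Z0" shows "Sm n \<phi> x = (\<Sum>y\<in>C n x. \<phi> y)"
proof -
  define I where "I = {i. x \<in> A n i}"
  have bij: "bij_betw (\<lambda>i. act (gg i) x) I (C n x)"
    unfolding bij_betw_def
  proof
    show "inj_on (\<lambda>i. act (gg i) x) I"
    proof (rule inj_onI)
      fix i j assume ij: "i \<in> I" "j \<in> I" "act (gg i) x = act (gg j) x"
      have "\<not> i < j" using ij by (auto simp: I_def A_def)
      moreover have "\<not> j < i" using ij by (auto simp: I_def A_def)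
      ultimately show "i = j" by simp
    qed
  next
    show "(\<lambda>i. act (gg i) x) ` I = C n x"
    proof
      show "(\<lambda>i. act (gg i) x) ` I \<subseteq> C n x" by (auto simp: I_def A_def)
    next
      show "C n x \<subseteq> (\<lambda>i. act (gg i) x) ` I"
      proof
        fix y assume y: "y \<in> C n x"
        then obtain h where h: "h \<in> carrier G" "y = act h x" using C_orb x by blast
        then obtain k where "gg k = h" using enum by (metis rangeE)
        then have ex: "act (gg k) x = y" using h by simp
        define i where "i = (LEAST k. act (gg k) x = y)"
        have i1: "act (gg i) x = y" unfolding i_def by (rule LeastI[of _ k]) (use ex in auto)
        have i2: "\<forall>j<i. act (gg j) x \<noteq> y" unfolding i_def using not_less_Least by blast
        have "i \<in> I" using i1 i2 y x by (auto simp: I_def A_def)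
        then show "y \<in> (\<lambda>i. act (gg i) x) ` I" using i1 by force
      qed
    qed
  qed
  have finI: "finite I" using bij C_fin bij_betw_finite by blast
  have "Sm n \<phi> x = (\<Sum>i\<in>I. \<phi> (act (gg i) x) * indicator (A n i) x)"
    unfolding Sm_def by (rule suminf_finite[OF finI]) (auto simp: I_def)
  also have "\<dots> = (\<Sum>i\<in>I. \<phi> (act (gg i) x))" by (rule sum.cong) (auto simp: I_def)
  also have "\<dots> = (\<Sum>y\<in>C n x. \<phi> y)" using sum.reindex_bij_betw[OF bij, of \<phi>] by simp
  finally show ?thesis .
qed


lemma Sm_one: "x \<in> Z0 \<Longrightarrow> Sm n (\<lambda>_. 1) x = of_nat (card (C n x))"
  using Sm_eq[of x n "\<lambda>_. 1"] by simp

definition T :: "nat \<Rightarrow> ('z \<Rightarrow> ennreal) \<Rightarrow> 'z \<Rightarrow> ennreal" where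
  "T n \<phi> x = Sm n \<phi> x / Sm n (\<lambda>_. 1) x"

lemma T_meas: "\<phi> \<in> borel_measurable M \<Longrightarrow> T n \<phi> \<in> borel_measurable M"
proof -
  assume "\<phi> \<in> borel_measurable M"
  then have [measurable]: "Sm n \<phi> \<in> borel_measurable M" by (rule Sm_meas)
  have [measurable]: "Sm n (\<lambda>_. 1) \<in> borel_measurable M" by (rule Sm_meas) simp
  show ?thesis unfolding T_def by measurable
qed

lemma T_eq: "x \<in> Z0 \<Longrightarrow> T n \<phi> x = (\<Sum>y\<in>C n x. \<phi> y) / of_nat (card (C n x))"
  by (simp add: T_def Sm_one Sm_eq)

lemma card_C_pos: "x \<in> Z0 \<Longrightarrow> card (C n x) > 0"
  using C_refl C_fin card_gt_0_iff by blast

lemma MT_point: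
  assumes z: "z \<in> Z0"
  shows "(\<Sum>i. \<phi> z * indicator (A n i) (act (inv\<^bsub>G\<^esub> (gg i)) z) / Sm n (\<lambda>_. 1) (act (inv\<^bsub>G\<^esub> (gg i)) z)) = \<phi> z"
proof -
  define w where "w i = act (inv\<^bsub>G\<^esub> (gg i)) z" for i
  define I where "I = {i. w i \<in> A n i}"
  have gz: "act (gg i) (w i) = z" for i unfolding w_def by (rule act_inv2) simp
  have CI: "C n (w i) = C n z" if "i \<in> I" for i
  proof -
    have "z \<in> C n (w i)" using that gz by (auto simp: I_def A_def)
    then show ?thesis using C_same by metis
  qed
  have bij: "bij_betw w I (C n z)"
    unfolding bij_betw_def
  proof
    show "inj_on w I"
    proof (rule inj_onI)
      fix i j assume ij: "i \<in> I" "j \<in> I" "w i = w j"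
      have e: "act (gg i) (w i) = act (gg j) (w i)" using gz ij(3) by metis
      have "\<not> i < j" using ij e by (auto simp: I_def A_def)
      moreover have "\<not> j < i" using ij e by (auto simp: I_def A_def)
      ultimately show "i = j" by simp
    qed
  next
    show "w ` I = C n z"
    proof
      show "w ` I \<subseteq> C n z"
      proof
        fix y assume "y \<in> w ` I"
        then obtain i where i: "i \<in> I" "y = w i" by auto
        then have "w i \<in> Z0" by (auto simp: I_def A_def)
        then have "w i \<in> C n (w i)" by (rule C_refl)
        then show "y \<in> C n z" using CI[OF i(1)] i by simp
      qed
    next
      show "C n z \<subseteq> w ` I"
      proof
        fix y assume y: "y \<in> C n z"
        have yZ: "y \<in> Z0" using y C_sub by blast
        have Cy: "C n y = C n z" using C_same[OF y] .
        have zy: "z \<in> C n y" using Cy C_refl[OF z] by simp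
        obtain h where h: "h \<in> carrier G" "z = act h y" using C_orb[OF yZ zy] by blast
        then obtain k where "gg k = h" using enum by (metis rangeE)
        then have ex: "act (gg k) y = z" using h by simp
        define i where "i = (LEAST k. act (gg k) y = z)"
        have i1: "act (gg i) y = z" unfolding i_def by (rule LeastI[of _ k]) (use ex in auto)
        have i2: "\<forall>j<i. act (gg j) y \<noteq> z" unfolding i_def using not_less_Least by blast
        have wi: "w i = y" unfolding w_def using i1 act_inv[of "gg i" y] by simp
        have "y \<in> A n i" using i1 i2 yZ zy by (auto simp: A_def)
        then have "i \<in> I" using wi by (simp add: I_def)
        then show "y \<in> w ` I" using wi by force
      qed
    qed
  qed
  have finI: "finite I" using bij C_fin bij_betw_finite by blast
  have cardI: "card I = card (C n z)" using bij bij_betw_same_card by blast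
  let ?c = "of_nat (card (C n z)) :: ennreal"
  have "(\<Sum>i. \<phi> z * indicator (A n i) (w i) / Sm n (\<lambda>_. 1) (w i)) = (\<Sum>i\<in>I. \<phi> z * indicator (A n i) (w i) / Sm n (\<lambda>_. 1) (w i))"
    by (rule suminf_finite[OF finI]) (auto simp: I_def)
  also have "\<dots> = (\<Sum>i\<in>I. \<phi> z / ?c)"
  proof (rule sum.cong)
    fix i assume i: "i \<in> I"
    then have "w i \<in> Z0" by (auto simp: I_def A_def)
    then have "Sm n (\<lambda>_. 1) (w i) = ?c" using Sm_one CI[OF i] by simp
    then show "\<phi> z * indicator (A n i) (w i) / Sm n (\<lambda>_. 1) (w i) = \<phi> z / ?c" using i by (simp add: I_def)
  qed simp
  also have "\<dots> = ?c * (\<phi> z / ?c)" using cardI by simp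
  also have "\<dots> = \<phi> z" 
  proof -
    have "?c \<noteq> 0" using card_C_pos[OF z] by simp
    then have "?c * (\<phi> z / ?c) = (\<phi> z * ?c) / ?c" by (simp add: ennreal_times_divide mult.commute)
    also have "\<dots> = \<phi> z" by (rule mult_divide_eq_ennreal) (use card_C_pos[OF z] in auto)
    finally show ?thesis .
  qed
  finally show ?thesis unfolding w_def .
qed

lemma MT:
  assumes phi[measurable]: "\<phi> \<in> borel_measurable M"
  shows "(\<integral>\<^sup>+ x. T n \<phi> x \<partial>M) = (\<integral>\<^sup>+ x. \<phi> x \<partial>M)"
proof -
  have [measurable]: "act (gg i) \<in> measurable M M" for i using act_meas by simp
  have [measurable]: "act (inv\<^bsub>G\<^esub> (gg i)) \<in> measurable M M" for i using act_meas grp by (simp add: group.inv_closed)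
  have [measurable]: "A n i \<in> sets M" for i by (rule sets_A)
  have [measurable]: "Sm n (\<lambda>_. 1) \<in> borel_measurable M" by (rule Sm_meas) simp
  define \<Psi> where "\<Psi> i z = \<phi> z * indicator (A n i) (act (inv\<^bsub>G\<^esub> (gg i)) z) / Sm n (\<lambda>_. 1) (act (inv\<^bsub>G\<^esub> (gg i)) z)" for i z
  have Psim[measurable]: "\<Psi> i \<in> borel_measurable M" for i unfolding \<Psi>_def by measurable
  have Tsum: "T n \<phi> x = (\<Sum>i. \<Psi> i (act (gg i) x))" for x
  proof -
    have "T n \<phi> x = (\<Sum>i. \<phi> (act (gg i) x) * indicator (A n i) x) * inverse (Sm n (\<lambda>_. 1) x)"
      by (simp add: T_def Sm_def divide_ennreal_def)
    also have "\<dots> = (\<Sum>i. \<phi> (act (gg i) x) * indicator (A n i) x * inverse (Sm n (\<lambda>_. 1) x))"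
      by simp
    also have "\<dots> = (\<Sum>i. \<Psi> i (act (gg i) x))"
      by (simp add: \<Psi>_def act_inv divide_ennreal_def)
    finally show ?thesis .
  qed
  have "(\<integral>\<^sup>+ x. T n \<phi> x \<partial>M) = (\<Sum>i. \<integral>\<^sup>+ x. \<Psi> i (act (gg i) x) \<partial>M)"
    unfolding Tsum by (rule nn_integral_suminf) measurable
  also have "\<dots> = (\<Sum>i. \<integral>\<^sup>+ x. \<Psi> i x \<partial>M)"
    using nn_act[OF gg_in Psim] by simp
  also have "\<dots> = (\<integral>\<^sup>+ x. (\<Sum>i. \<Psi> i x) \<partial>M)"
    by (rule nn_integral_suminf[symmetric]) measurable
  also have "\<dots> = (\<integral>\<^sup>+ x. \<phi> x \<partial>M)"
    by (rule nn_integral_cong_AE) (use AE_Z0 in \<open>auto simp: \<Psi>_def MT_point\<close>)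
  finally show ?thesis .
qed


lemma orbit_closed: "y \<in> orbit G act x \<Longrightarrow> g \<in> carrier G \<Longrightarrow> act g y \<in> orbit G act x"
proof -
  assume y: "y \<in> orbit G act x" and g: "g \<in> carrier G"
  then obtain h where h: "h \<in> carrier G" "y = act h x" by (auto simp: orbit_def)
  then have "act g y = act (g \<otimes>\<^bsub>G\<^esub> h) x" using act_mult g by simp
  moreover have "g \<otimes>\<^bsub>G\<^esub> h \<in> carrier G" using g h grp by (simp add: group.subgroupE(4) group.subgroup_self)
  ultimately show ?thesis by (auto simp: orbit_def)
qed

lemma S_car: "s \<in> S \<Longrightarrow> s \<in> carrier G" using SG by auto

lemma pair_count_le:
  assumes finV: "finite V" and inj: "inj_on f D" and into: "f ` D \<subseteq> {(y, s). y \<in> V \<and> s \<in> S \<and> P y s}"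
  shows "card D \<le> card {(y, s). y \<in> V \<and> s \<in> S \<and> P y s}"
proof -
  have "finite {(y, s). y \<in> V \<and> s \<in> S \<and> P y s}"
    by (rule finite_subset[of _ "V \<times> S"]) (use finV finS in auto)
  then show ?thesis using card_inj_on_le[OF inj into] by simp
qed

lemma boundary_bound:
  assumes finV: "finite V" and VO: "V \<subseteq> orbit G act x"
  shows "card (boundary_edges (schreier_edges S act (orbit G act x)) V)
           \<le> card {(y, s). y \<in> V \<and> s \<in> S \<and> act s y \<notin> V}"
proof -
  let ?B = "boundary_edges (schreier_edges S act (orbit G act x)) V"
  let ?P = "{(y, s). y \<in> V \<and> s \<in> S \<and> act s y \<notin> V}"
  have ex: "\<exists>p. p \<in> ?P \<and> e = {fst p, act (snd p) (fst p)}" if e: "e \<in> ?B" for e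
  proof -
    from e obtain a s where a: "a \<in> orbit G act x" "s \<in> S" "act s a \<noteq> a" "e = {a, act s a}"
      and c: "card (e \<inter> V) = 1"
      by (auto simp: boundary_edges_def schreier_edges_def)
    show ?thesis
    proof (cases "a \<in> V")
      case True
      then have "act s a \<notin> V" using c a by (auto simp: insert_absorb)
      then show ?thesis using True a by (intro exI[of _ "(a, s)"]) auto
    next
      case False
      then have in2: "act s a \<in> V" using c a by (cases "act s a \<in> V") auto
      have "inv\<^bsub>G\<^esub> s \<in> S" using Sinv a by auto
      moreover have "act (inv\<^bsub>G\<^esub> s) (act s a) = a" using act_inv S_car a by simp
      ultimately show ?thesis using False in2 a by (intro exI[of _ "(act s a, inv\<^bsub>G\<^esub> s)"]) auto
    qed
  qed
  define f where "f e = (SOME p. p \<in> ?P \<and> e = {fst p, act (snd p) (fst p)})" for e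
  have f: "f e \<in> ?P \<and> e = {fst (f e), act (snd (f e)) (fst (f e))}" if "e \<in> ?B" for e
    unfolding f_def by (rule someI_ex) (rule ex[OF that])
  have "inj_on f ?B"
  proof (rule inj_onI)
    fix e1 e2 assume "e1 \<in> ?B" "e2 \<in> ?B" "f e1 = f e2"
    then show "e1 = e2" using f by metis
  qed
  moreover have "f ` ?B \<subseteq> ?P"
  proof
    fix p assume "p \<in> f ` ?B"
    then obtain e where "e \<in> ?B" "p = f e" by blast
    then show "p \<in> ?P" using f[of e] by simp
  qed
  ultimately show ?thesis by (rule pair_count_le[OF finV])
qed


lemma C_sub_orbit: "x \<in> Z0 \<Longrightarrow> C n x \<subseteq> orbit G act x"
  using C_orb unfolding orbit_def by blast

definition bad :: "nat \<Rightarrow> nat \<Rightarrow> 'z \<Rightarrow> 'g \<Rightarrow> bool" where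
  "bad m K y s \<longleftrightarrow> act s y \<notin> C m y \<or> card (C m y) > K"

definition Dcut :: "nat \<Rightarrow> nat \<Rightarrow> 'z \<Rightarrow> 'z set \<Rightarrow> 'z set set" where
  "Dcut m K x V = {e \<in> induced_edges (schreier_edges S act (orbit G act x)) V.
       \<exists>y\<in>V. \<exists>s\<in>S. e = {y, act s y} \<and> bad m K y s}"

lemma Dcut_sub: "Dcut m K x V \<subseteq> induced_edges (schreier_edges S act (orbit G act x)) V"
  by (auto simp: Dcut_def)

lemma Dcut_card:
  assumes finV: "finite V"
  shows "card (Dcut m K x V) \<le> card {(y, s). y \<in> V \<and> s \<in> S \<and> bad m K y s}"
proof -
  let ?B = "Dcut m K x V"
  let ?P = "{(y, s). y \<in> V \<and> s \<in> S \<and> bad m K y s}"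
  have ex: "\<exists>p. p \<in> ?P \<and> e = {fst p, act (snd p) (fst p)}" if e: "e \<in> ?B" for e
    using e by (auto simp: Dcut_def)
  define f where "f e = (SOME p. p \<in> ?P \<and> e = {fst p, act (snd p) (fst p)})" for e
  have f: "f e \<in> ?P \<and> e = {fst (f e), act (snd (f e)) (fst (f e))}" if "e \<in> ?B" for e
    unfolding f_def by (rule someI_ex) (rule ex[OF that])
  have "inj_on f ?B"
  proof (rule inj_onI)
    fix e1 e2 assume "e1 \<in> ?B" "e2 \<in> ?B" "f e1 = f e2"
    then show "e1 = e2" using f by metis
  qed
  moreover have "f ` ?B \<subseteq> ?P"
  proof
    fix p assume "p \<in> f ` ?B"
    then obtain e where "e \<in> ?B" "p = f e" by blast
    then show "p \<in> ?P" using f[of e] by simp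
  qed
  ultimately show ?thesis by (rule pair_count_le[OF finV])
qed

lemma Dcut_comp:
  assumes x: "x \<in> Z0" and K: "K \<ge> 1" and v: "v \<in> C n x"
  shows "card (component (induced_edges (schreier_edges S act (orbit G act x)) (C n x) - Dcut m K x (C n x)) v) \<le> K"
proof -
  let ?V = "C n x"
  let ?E = "induced_edges (schreier_edges S act (orbit G act x)) ?V - Dcut m K x ?V"
  have vZ: "v \<in> Z0" using v C_sub by blast
  have stepE: "C m a = C m b \<and> b \<in> C m a \<and> card (C m a) \<le> K" if ab: "{a, b} \<in> ?E" for a b
  proof -
    have ab1: "{a, b} \<in> schreier_edges S act (orbit G act x)" and sub: "{a, b} \<subseteq> ?V"
      and nD: "{a, b} \<notin> Dcut m K x ?V" using ab by (auto simp: induced_edges_def)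
    from ab1 obtain y s where ys: "y \<in> orbit G act x" "s \<in> S" "act s y \<noteq> y" "{a, b} = {y, act s y}"
      unfolding schreier_edges_def by blast
    have yV: "y \<in> ?V" using ys(4) sub by auto
    then have yZ: "y \<in> Z0" using C_sub by blast
    have "\<not> bad m K y s" using nD ys yV sub ab by (auto simp: Dcut_def induced_edges_def)
    then have g: "act s y \<in> C m y" "card (C m y) \<le> K" by (auto simp: bad_def)
    have Cs: "C m (act s y) = C m y" using C_same[OF g(1)] .
    have yy: "y \<in> C m y" using C_refl[OF yZ] .
    have "a = y \<or> a = act s y" "b = y \<or> b = act s y" using ys(4) by (auto simp: doubleton_eq_iff)
    then show ?thesis using Cs g yy by auto
  qed
  have inv: "w = v \<or> (w \<in> C m v \<and> card (C m v) \<le> K)"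
    if "(v, w) \<in> {(a, b). {a, b} \<in> ?E}\<^sup>*" for w
    using that
  proof (induction rule: rtrancl_induct)
    case base then show ?case by simp
  next
    case (step w b)
    have st: "C m w = C m b \<and> b \<in> C m w \<and> card (C m w) \<le> K" using stepE step.hyps(2) by blast
    show ?case
    proof (cases "w = v")
      case True then show ?thesis using st by auto
    next
      case False
      then have "w \<in> C m v" using step.IH by auto
      then have "C m w = C m v" by (rule C_same)
      then show ?thesis using st by auto
    qed
  qed
  have comp_sub: "component ?E v \<subseteq> {v} \<union> (if card (C m v) \<le> K then C m v else {})"
    using inv unfolding component_def by auto
  show ?thesis
  proof (cases "card (C m v) \<le> K")
    case True
    then have "component ?E v \<subseteq> C m v" using comp_sub C_refl[OF vZ] by auto
    then have "card (component ?E v) \<le> card (C m v)" using C_fin card_mono by blast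
    then show ?thesis using True by simp
  next
    case False
    then have "component ?E v \<subseteq> {v}" using comp_sub by auto
    then have "card (component ?E v) \<le> 1" using card_mono[of "{v}"] by simp
    then show ?thesis using K by simp
  qed
qed


lemma null_compl_Z0: "emeasure M (UNIV - Z0) = 0"
proof -
  have "emeasure M {x \<in> space M. x \<notin> Z0} = 0" by (rule emeasure_eq_0_AE) (use AE_Z0 in simp)
  then show ?thesis using spM by (simp add: set_diff_eq)
qed

lemma emeasure_null_sub: "B \<in> sets M \<Longrightarrow> B \<subseteq> UNIV - Z0 \<Longrightarrow> emeasure M B = 0"
  using emeasure_mono[of B "UNIV - Z0" M] null_compl_Z0 Z0_sets sets.compl_sets[OF Z0_sets] spM
  by (simp add: le_zero_eq)

lemma emeasure_fin: "emeasure M B \<noteq> \<infinity>"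
  using ps prob_space.emeasure_le_1[OF ps, of B] by (auto simp: top_unique)

definition Bs :: "nat \<Rightarrow> 'g \<Rightarrow> 'z set" where "Bs n s = {y. act s y \<notin> C n y}"

lemma Bs_sets: "s \<in> S \<Longrightarrow> Bs n s \<in> sets M"
  using sets.compl_sets[OF sets_C[OF S_car, of s n]] spM by (simp add: Bs_def set_diff_eq)

definition cE :: "nat \<Rightarrow> 'z \<Rightarrow> ennreal" where "cE n y = (\<Sum>s\<in>S. indicator (Bs n s) y)"

lemma cE_meas: "cE n \<in> borel_measurable M"
  unfolding cE_def by (intro borel_measurable_sum borel_measurable_indicator Bs_sets)

lemma cE_card: "cE n y = of_nat (card {s\<in>S. act s y \<notin> C n y})"
  unfolding cE_def by (subst sum_indicator_card_enn[OF finS]) (simp add: Bs_def)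

lemma cE_int: "(\<integral>\<^sup>+ y. cE n y \<partial>M) = (\<Sum>s\<in>S. emeasure M (Bs n s))"
proof -
  have m: "\<And>s. s \<in> S \<Longrightarrow> indicator (Bs n s) \<in> borel_measurable M"
    by (intro borel_measurable_indicator Bs_sets)
  show ?thesis unfolding cE_def
    by (subst nn_integral_sum[OF m]) (auto intro!: sum.cong simp: nn_integral_indicator[OF Bs_sets])
qed

lemma Bs_tend: assumes s: "s \<in> S" shows "(\<lambda>n. emeasure M (Bs n s)) \<longlonglongrightarrow> 0"
proof -
  have Cs: "C n y \<subseteq> C (Suc n) y" for n y by (rule C_mono) simp
  have dec: "decseq (\<lambda>n. Bs n s)"
    by (rule decseq_SucI) (use Cs in \<open>auto simp: Bs_def\<close>)
  have "(\<lambda>n. emeasure M (Bs n s)) \<longlonglongrightarrow> emeasure M (\<Inter>n. Bs n s)"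
    by (rule Lim_emeasure_decseq) (use dec Bs_sets[OF s] emeasure_fin in auto)
  moreover have "emeasure M (\<Inter>n. Bs n s) = 0"
  proof (rule emeasure_null_sub)
    show "(\<Inter>n. Bs n s) \<in> sets M" using Bs_sets[OF s] by auto
    show "(\<Inter>n. Bs n s) \<subseteq> UNIV - Z0"
    proof
      fix y assume y: "y \<in> (\<Inter>n. Bs n s)"
      have "y \<notin> Z0"
      proof
        assume "y \<in> Z0"
        then obtain n where "act s y \<in> C n y" using C_exh S_car[OF s] by blast
        then show False using y by (auto simp: Bs_def)
      qed
      then show "y \<in> UNIV - Z0" by simp
    qed
  qed
  ultimately show ?thesis by simp
qed

lemma cE_tend: "(\<lambda>n. \<integral>\<^sup>+ y. cE n y \<partial>M) \<longlonglongrightarrow> 0"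
proof -
  have "(\<lambda>n. \<Sum>s\<in>S. emeasure M (Bs n s)) \<longlonglongrightarrow> (\<Sum>s\<in>S. 0)"
    by (rule tendsto_sum) (rule Bs_tend)
  then show ?thesis unfolding cE_int by simp
qed

definition Big :: "nat \<Rightarrow> nat \<Rightarrow> 'z set" where "Big m K = {y. of_nat K < Sm m (\<lambda>_. 1) y}"

lemma Big_sets: "Big m K \<in> sets M"
proof -
  have [measurable]: "Sm m (\<lambda>_. 1) \<in> borel_measurable M" by (rule Sm_meas) simp
  have "{y \<in> space M. of_nat K < Sm m (\<lambda>_. 1) y} \<in> sets M" by measurable
  then show ?thesis using spM by (simp add: Big_def)
qed

lemma Big_tend: "(\<lambda>K. emeasure M (Big m K)) \<longlonglongrightarrow> 0"
proof -
  have dec: "decseq (\<lambda>K. Big m K)"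
    by (rule decseq_SucI) (auto simp: Big_def intro: le_less_trans[rotated])
  have "(\<lambda>K. emeasure M (Big m K)) \<longlonglongrightarrow> emeasure M (\<Inter>K. Big m K)"
    by (rule Lim_emeasure_decseq) (use dec Big_sets emeasure_fin in auto)
  moreover have "emeasure M (\<Inter>K. Big m K) = 0"
  proof -
    have s1: "(\<Inter>K. Big m K) \<in> sets M" using Big_sets by auto
    have s2: "(\<Inter>K. Big m K) \<subseteq> UNIV - Z0"
    proof
      fix y assume y: "y \<in> (\<Inter>K. Big m K)"
      have "y \<notin> Z0"
      proof
        assume "y \<in> Z0"
        then have "Sm m (\<lambda>_. 1) y = of_nat (card (C m y))" by (rule Sm_one)
        moreover have "y \<in> Big m (card (C m y))" using y by blast
        ultimately show False by (simp add: Big_def)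
      qed
      then show "y \<in> UNIV - Z0" by simp
    qed
    show ?thesis by (rule emeasure_null_sub[OF s1 s2])
  qed
  ultimately show ?thesis by simp
qed

lemma exists_Kc: "\<exists>Kc. \<forall>m. Kc m \<ge> 1 \<and> of_nat (card S) * emeasure M (Big m (Kc m)) < ennreal ((1/2)^m)"
proof -
  have "\<exists>K. K \<ge> 1 \<and> of_nat (card S) * emeasure M (Big m K) < ennreal ((1/2)^m)" for m
  proof -
    have "(\<lambda>K. of_nat (card S) * emeasure M (Big m K)) \<longlonglongrightarrow> of_nat (card S) * 0"
      by (intro tendsto_mult_ennreal tendsto_const Big_tend) auto
    then have "eventually (\<lambda>K. of_nat (card S) * emeasure M (Big m K) < ennreal ((1/2)^m)) sequentially"
      by (intro order_tendstoD(2)) auto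
    then obtain K0 where "\<forall>K\<ge>K0. of_nat (card S) * emeasure M (Big m K) < ennreal ((1/2)^m)"
      by (auto simp: eventually_sequentially)
    then show ?thesis by (intro exI[of _ "max 1 K0"]) auto
  qed
  then show ?thesis by metis
qed


definition Kc :: "nat \<Rightarrow> nat" where
  "Kc = (SOME Kc. \<forall>m. Kc m \<ge> 1 \<and> of_nat (card S) * emeasure M (Big m (Kc m)) < ennreal ((1/2)^m))"

lemma Kc: "Kc m \<ge> 1" "of_nat (card S) * emeasure M (Big m (Kc m)) < ennreal ((1/2)^m)"
  using someI_ex[OF exists_Kc] unfolding Kc_def[symmetric] by auto

definition H :: "nat \<Rightarrow> 'z \<Rightarrow> ennreal" where
  "H m y = cE m y + of_nat (card S) * indicator (Big m (Kc m)) y"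

lemma H_meas[measurable]: "H m \<in> borel_measurable M"
proof -
  have [measurable]: "cE m \<in> borel_measurable M" by (rule cE_meas)
  have [measurable]: "Big m (Kc m) \<in> sets M" by (rule Big_sets)
  show ?thesis unfolding H_def by measurable
qed

lemma H_tend: "(\<lambda>m. \<integral>\<^sup>+ y. H m y \<partial>M) \<longlonglongrightarrow> 0"
proof -
  have eq: "(\<integral>\<^sup>+ y. H m y \<partial>M) = (\<integral>\<^sup>+ y. cE m y \<partial>M) + of_nat (card S) * emeasure M (Big m (Kc m))" for m
  proof -
    have [measurable]: "cE m \<in> borel_measurable M" by (rule cE_meas)
    have [measurable]: "Big m (Kc m) \<in> sets M" by (rule Big_sets)
    have m2: "(\<lambda>y. of_nat (card S) * indicator (Big m (Kc m)) y :: ennreal) \<in> borel_measurable M" by measurable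
    show ?thesis unfolding H_def
      by (subst nn_integral_add[OF cE_meas m2]) (simp add: nn_integral_cmult_indicator[OF Big_sets])
  qed
  have le: "(\<integral>\<^sup>+ y. H m y \<partial>M) \<le> (\<integral>\<^sup>+ y. cE m y \<partial>M) + ennreal ((1/2)^m)" for m
    unfolding eq using Kc(2)[of m] by (intro add_left_mono) simp
  have t: "(\<lambda>m. (\<integral>\<^sup>+ y. cE m y \<partial>M) + ennreal ((1/2)^m)) \<longlonglongrightarrow> 0 + ennreal 0"
    by (intro tendsto_add cE_tend tendsto_ennrealI LIMSEQ_power_zero) auto
  show ?thesis
    by (rule tendsto_sandwich[of "\<lambda>_. 0" _ _ "\<lambda>m. (\<integral>\<^sup>+ y. cE m y \<partial>M) + ennreal ((1/2)^m)"])
       (use le t in auto)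
qed

end

context hf begin
definition mm :: "nat \<Rightarrow> nat" where "mm = (SOME r. \<forall>i. (\<integral>\<^sup>+ y. H (r i) y \<partial>M) < ennreal ((1/4)^i))"
definition nn :: "nat \<Rightarrow> nat" where "nn = (SOME r. \<forall>i. (\<integral>\<^sup>+ y. cE (r i) y \<partial>M) < ennreal ((1/4)^i))"

lemma mm: "(\<integral>\<^sup>+ y. H (mm i) y \<partial>M) < ennreal ((1/4)^i)"
  using someI_ex[OF tendsto_zero_pick[OF H_tend]] unfolding mm_def[symmetric] by blast

lemma nn: "(\<integral>\<^sup>+ y. cE (nn i) y \<partial>M) < ennreal ((1/4)^i)"
  using someI_ex[OF tendsto_zero_pick[OF cE_tend]] unfolding nn_def[symmetric] by blast

definition Gf :: "'z \<Rightarrow> ennreal" where "Gf y = (\<Sum>j. ennreal (2^j) * H (mm j) y)"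

lemma Gf_meas[measurable]: "Gf \<in> borel_measurable M"
  unfolding Gf_def by measurable

lemma geo_fin: "(\<Sum>i. ennreal ((1/2)^i)) \<noteq> \<infinity>"
proof -
  have "(\<Sum>i. ennreal ((1/2::real)^i)) \<noteq> Orderings.top"
    by (rule ennreal_suminf_neq_top[OF summable_geometric]) auto
  then show ?thesis by simp
qed

lemma Gf_int: "(\<integral>\<^sup>+ y. Gf y \<partial>M) \<noteq> \<infinity>"
proof -
  have "(\<integral>\<^sup>+ y. Gf y \<partial>M) = (\<Sum>j. \<integral>\<^sup>+ y. ennreal (2^j) * H (mm j) y \<partial>M)"
    unfolding Gf_def by (rule nn_integral_suminf) measurable
  also have "\<dots> = (\<Sum>j. ennreal (2^j) * \<integral>\<^sup>+ y. H (mm j) y \<partial>M)"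
    by (simp add: nn_integral_cmult)
  also have "\<dots> \<le> (\<Sum>j. ennreal ((1/2)^j))"
  proof (rule suminf_le)
    fix j :: nat
    have "ennreal (2^j) * (\<integral>\<^sup>+ y. H (mm j) y \<partial>M) \<le> ennreal (2^j) * ennreal ((1/4)^j)"
      using mm[of j] by (intro mult_left_mono) auto
    also have "\<dots> = ennreal ((1/2)^j)"
    proof -
      have e: "(2::real)^j * (1/4)^j = (2 * (1/4))^j" by (rule power_mult_distrib[symmetric])
      show ?thesis by (subst ennreal_mult[symmetric]) (simp_all add: e)
    qed
    finally show "ennreal (2^j) * (\<integral>\<^sup>+ y. H (mm j) y \<partial>M) \<le> ennreal ((1/2)^j)" .
  qed (rule summableI)+
  finally show ?thesis using geo_fin by (auto simp: top_unique)
qed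

lemma Gf_ge: "ennreal (2^j) * H (mm j) y \<le> Gf y"
  unfolding Gf_def using sum_le_suminf[of "\<lambda>j. ennreal (2^j) * H (mm j) y" "{j}"] by auto

lemma AE_sum_fin: "AE x in M. (\<Sum>i. T (nn i) (cE (nn i)) x) \<noteq> \<infinity>"
proof (rule nn_integral_PInf_AE)
  have [measurable]: "T (nn i) (cE (nn i)) \<in> borel_measurable M" for i by (intro T_meas cE_meas)
  show "(\<lambda>x. \<Sum>i. T (nn i) (cE (nn i)) x) \<in> borel_measurable M" by measurable
  have "(\<integral>\<^sup>+ x. (\<Sum>i. T (nn i) (cE (nn i)) x) \<partial>M) = (\<Sum>i. \<integral>\<^sup>+ x. T (nn i) (cE (nn i)) x \<partial>M)"
    by (rule nn_integral_suminf) measurable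
  also have "\<dots> = (\<Sum>i. \<integral>\<^sup>+ x. cE (nn i) x \<partial>M)"
    by (rule suminf_cong) (rule MT[OF cE_meas])
  also have "\<dots> \<le> (\<Sum>i. ennreal ((1/4)^i))"
  proof (rule suminf_le)
    fix i show "(\<integral>\<^sup>+ x. cE (nn i) x \<partial>M) \<le> ennreal ((1/4)^i)" using nn[of i] by (rule less_imp_le)
  qed (rule summableI)+
  finally have le: "(\<integral>\<^sup>+ x. (\<Sum>i. T (nn i) (cE (nn i)) x) \<partial>M) \<le> (\<Sum>i. ennreal ((1/4)^i))" .
  have "(\<Sum>i. ennreal ((1/4::real)^i)) \<noteq> \<infinity>"
  proof -
    have "(\<Sum>i. ennreal ((1/4::real)^i)) \<noteq> Orderings.top"
      by (rule ennreal_suminf_neq_top[OF summable_geometric]) auto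
    then show ?thesis by simp
  qed
  then show "(\<integral>\<^sup>+ x. (\<Sum>i. T (nn i) (cE (nn i)) x) \<partial>M) \<noteq> \<infinity>" using le by (auto simp: top_unique)
qed

lemma AE_liminf_fin: "AE x in M. liminf (\<lambda>i. T (nn i) Gf x) \<noteq> \<infinity>"
proof (rule nn_integral_PInf_AE)
  have [measurable]: "T (nn i) Gf \<in> borel_measurable M" for i by (intro T_meas Gf_meas)
  show "(\<lambda>x. liminf (\<lambda>i. T (nn i) Gf x)) \<in> borel_measurable M" by measurable
  have "(\<integral>\<^sup>+ x. liminf (\<lambda>i. T (nn i) Gf x) \<partial>M) \<le> liminf (\<lambda>i. \<integral>\<^sup>+ x. T (nn i) Gf x \<partial>M)"
    by (rule nn_integral_liminf) measurable
  also have "\<dots> = (\<integral>\<^sup>+ x. Gf x \<partial>M)" by (simp add: MT Liminf_const)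
  finally show "(\<integral>\<^sup>+ x. liminf (\<lambda>i. T (nn i) Gf x) \<partial>M) \<noteq> \<infinity>" using Gf_int by (auto simp: top_unique)
qed


lemma sum_class: "x \<in> Z0 \<Longrightarrow> (\<Sum>y\<in>C n x. \<phi> y) = of_nat (card (C n x)) * T n \<phi> x"
proof -
  assume x: "x \<in> Z0"
  let ?c = "of_nat (card (C n x)) :: ennreal"
  have "?c * T n \<phi> x = ?c * ((\<Sum>y\<in>C n x. \<phi> y) / ?c)" using T_eq[OF x] by simp
  also have "\<dots> = ((\<Sum>y\<in>C n x. \<phi> y) * ?c) / ?c" by (simp add: ennreal_times_divide mult.commute)
  also have "\<dots> = (\<Sum>y\<in>C n x. \<phi> y)" by (rule mult_divide_eq_ennreal) (use card_C_pos[OF x] in auto)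
  finally show ?thesis by simp
qed

lemma card_pairs: "finite V \<Longrightarrow> card {(y, s). y \<in> V \<and> s \<in> S \<and> P y s} = (\<Sum>y\<in>V. card {s\<in>S. P y s})"
proof -
  assume V: "finite V"
  have "{(y, s). y \<in> V \<and> s \<in> S \<and> P y s} = (SIGMA y:V. {s\<in>S. P y s})" by auto
  then show ?thesis using V finS by simp
qed

lemma bd_enn: assumes x: "x \<in> Z0"
  shows "of_nat (card (boundary_edges (schreier_edges S act (orbit G act x)) (C n x)))
           \<le> of_nat (card (C n x)) * T n (cE n) x"
proof -
  let ?V = "C n x"
  have "card (boundary_edges (schreier_edges S act (orbit G act x)) ?V)
           \<le> card {(y, s). y \<in> ?V \<and> s \<in> S \<and> act s y \<notin> ?V}"
    by (rule boundary_bound[OF C_fin C_sub_orbit[OF x]])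
  also have "\<dots> = (\<Sum>y\<in>?V. card {s\<in>S. act s y \<notin> ?V})" by (rule card_pairs[OF C_fin])
  finally have le: "of_nat (card (boundary_edges (schreier_edges S act (orbit G act x)) ?V))
      \<le> (of_nat (\<Sum>y\<in>?V. card {s\<in>S. act s y \<notin> ?V}) :: ennreal)" by (simp only: of_nat_le_iff)
  have "(of_nat (\<Sum>y\<in>?V. card {s\<in>S. act s y \<notin> ?V}) :: ennreal) = (\<Sum>y\<in>?V. of_nat (card {s\<in>S. act s y \<notin> ?V}))"
    by simp
  also have "\<dots> = (\<Sum>y\<in>?V. cE n y)"
  proof (rule sum.cong)
    fix y assume "y \<in> ?V"
    then have "C n y = ?V" by (rule C_same)
    then show "of_nat (card {s\<in>S. act s y \<notin> ?V}) = cE n y" by (simp add: cE_card)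
  qed simp
  also have "\<dots> = of_nat (card ?V) * T n (cE n) x" by (rule sum_class[OF x])
  finally show ?thesis using le by simp
qed

lemma H_bound: assumes y: "y \<in> Z0"
  shows "of_nat (card {s\<in>S. bad m (Kc m) y s}) \<le> H m y"
proof -
  let ?K = "Kc m"
  have sub: "{s\<in>S. bad m ?K y s} \<subseteq> {s\<in>S. act s y \<notin> C m y} \<union> (if ?K < card (C m y) then S else {})"
    by (auto simp: bad_def)
  have "card {s\<in>S. bad m ?K y s} \<le> card ({s\<in>S. act s y \<notin> C m y} \<union> (if ?K < card (C m y) then S else {}))"
    by (rule card_mono[OF _ sub]) (use finS in auto)
  also have "\<dots> \<le> card {s\<in>S. act s y \<notin> C m y} + card (if ?K < card (C m y) then S else {})"
    by (rule card_Un_le)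
  finally have le_nat: "card {s\<in>S. bad m ?K y s} \<le> card {s\<in>S. act s y \<notin> C m y} + card (if ?K < card (C m y) then S else {})" .
  have le: "(of_nat (card {s\<in>S. bad m ?K y s}) :: ennreal) \<le> of_nat (card {s\<in>S. act s y \<notin> C m y}) + of_nat (card (if ?K < card (C m y) then S else {}))"
    unfolding of_nat_add[symmetric] using le_nat by (rule of_nat_mono)
  have big: "y \<in> Big m ?K \<longleftrightarrow> ?K < card (C m y)"
    using Sm_one[OF y, of m] by (simp add: Big_def)
  have e2: "(of_nat (card (if ?K < card (C m y) then S else {})) :: ennreal) = of_nat (card S) * indicator (Big m ?K) y"
    using big by (simp add: indicator_def)
  have e1: "H m y = of_nat (card {s\<in>S. act s y \<notin> C m y}) + of_nat (card S) * indicator (Big m ?K) y"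
    unfolding H_def cE_card ..
  show ?thesis unfolding e1 e2[symmetric] by (rule le)
qed

lemma D_enn: assumes x: "x \<in> Z0"
  shows "of_nat (card (Dcut m (Kc m) x (C n x))) \<le> (\<Sum>y\<in>C n x. H m y)"
proof -
  let ?V = "C n x"
  have "card (Dcut m (Kc m) x ?V) \<le> card {(y, s). y \<in> ?V \<and> s \<in> S \<and> bad m (Kc m) y s}"
    by (rule Dcut_card[OF C_fin])
  also have "\<dots> = (\<Sum>y\<in>?V. card {s\<in>S. bad m (Kc m) y s})" by (rule card_pairs[OF C_fin])
  finally have le: "(of_nat (card (Dcut m (Kc m) x ?V)) :: ennreal) \<le> (\<Sum>y\<in>?V. of_nat (card {s\<in>S. bad m (Kc m) y s}))"
    unfolding of_nat_sum[symmetric] by (rule of_nat_mono)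
  also have "\<dots> \<le> (\<Sum>y\<in>?V. H m y)"
    by (rule sum_mono) (use H_bound C_sub in blast)
  finally show ?thesis .
qed


lemma main_point:
  assumes x: "x \<in> Z0"
    and sf: "(\<Sum>i. T (nn i) (cE (nn i)) x) \<noteq> \<infinity>"
    and lf: "liminf (\<lambda>i. T (nn i) Gf x) \<noteq> \<infinity>"
  shows "has_hyperfinite_folner S act (orbit G act x)"
proof -
  define t where "t i = T (nn i) (cE (nn i)) x" for i
  define \<tau> where "\<tau> i = enn2real (t i)" for i
  have sf': "(\<Sum>i. t i) < \<infinity>" using sf by (simp add: t_def top.not_eq_extremum)
  have t_fin: "t i < \<infinity>" for i using ennreal_suminf_lessD[OF sf'] .
  have t\<tau>: "t i = ennreal (\<tau> i)" for i using t_fin[of i] by (simp add: \<tau>_def)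
  have \<tau>0: "0 \<le> \<tau> i" for i by (simp add: \<tau>_def)
  have "summable \<tau>"
    by (rule summable_suminf_not_top[OF \<tau>0]) (use sf' t\<tau> in \<open>simp add: top.not_eq_extremum\<close>)
  then have \<tau>lim: "\<tau> \<longlonglongrightarrow> 0" by (rule summable_LIMSEQ_zero)
  let ?f = "\<lambda>i. T (nn i) Gf x"
  have lt: "liminf ?f < Orderings.top" using lf by (simp add: top.not_eq_extremum)
  obtain r0 where r0: "r0 \<ge> 0" "liminf ?f = ennreal r0"
    using lt unfolding less_top_ennreal by blast
  define B where "B = r0 + 1"
  have B0: "B > 0" using r0 by (simp add: B_def)
  have "ennreal r0 < ennreal B" using r0(1) by (subst ennreal_less_iff) (auto simp: B_def)
  then have notle: "\<not> ennreal B \<le> liminf ?f" using r0(2) by (simp add: not_le)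
  have nl: "\<not> (\<forall>y<ennreal B. eventually (\<lambda>i. y < ?f i) sequentially)"
    using notle le_Liminf_iff[of "ennreal B" sequentially ?f] by blast
  then obtain yb where yb: "yb < ennreal B" "\<not> eventually (\<lambda>i. yb < ?f i) sequentially"
    by blast
  obtain r :: "nat \<Rightarrow> nat" where r: "strict_mono r" "\<And>k. \<not> yb < ?f (r k)"
    using not_eventually_sequentiallyD[OF yb(2)] by blast
  have TB: "T (nn (r k)) Gf x \<le> ennreal B" for k
    using r(2)[of k] yb(1) by (simp add: not_less)
  define Fn where "Fn k = C (nn (r k)) x" for k
  let ?E = "schreier_edges S act (orbit G act x)"
  have basic: "finite (Fn k) \<and> Fn k \<noteq> {} \<and> Fn k \<subseteq> orbit G act x" for k
    unfolding Fn_def using C_fin C_refl[OF x] C_sub_orbit[OF x] by blast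
  have cpos: "card (Fn k) > 0" for k using card_C_pos[OF x] by (simp add: Fn_def)
  have iso_le: "iso_const ?E (Fn k) \<le> \<tau> (r k)" for k
  proof -
    have "of_nat (card (boundary_edges ?E (Fn k))) \<le> of_nat (card (Fn k)) * t (r k)"
      using bd_enn[OF x, of "nn (r k)"] by (simp add: Fn_def t_def)
    then have "ennreal (real (card (boundary_edges ?E (Fn k)))) \<le> ennreal (real (card (Fn k)) * \<tau> (r k))"
      by (simp add: t\<tau> ennreal_of_nat_eq_real_of_nat ennreal_mult \<tau>0)
    then have "real (card (boundary_edges ?E (Fn k))) \<le> real (card (Fn k)) * \<tau> (r k)"
      using \<tau>0 by (subst (asm) ennreal_le_iff) auto
    then show ?thesis using cpos[of k] by (simp add: iso_const_def divide_le_eq mult.commute)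
  qed
  have iso0: "0 \<le> iso_const ?E (Fn k)" for k by (simp add: iso_const_def)
  have \<tau>r: "(\<lambda>k. \<tau> (r k)) \<longlonglongrightarrow> 0" using LIMSEQ_subseq_LIMSEQ[OF \<tau>lim r(1)] by (simp add: o_def)
  have isolim: "(\<lambda>k. iso_const ?E (Fn k)) \<longlonglongrightarrow> 0"
    by (rule tendsto_sandwich[of "\<lambda>_. 0" _ sequentially "\<lambda>k. \<tau> (r k)"]) (use iso_le iso0 \<tau>r in auto)
  have folner: "folner_seq (orbit G act x) ?E Fn"
    unfolding folner_seq_def using basic isolim by blast
  have hyp: "hyperfinite_graph_seq Fn (\<lambda>k. induced_edges ?E (Fn k))"
    unfolding hyperfinite_graph_seq_def
  proof (intro allI impI)
    fix \<epsilon> :: real assume \<epsilon>: "\<epsilon> > 0"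
    have "eventually (\<lambda>j. (1/2::real)^j < \<epsilon> / B) sequentially"
      by (rule order_tendstoD(2)[OF LIMSEQ_power_zero]) (use \<epsilon> B0 in auto)
    then obtain j where j: "(1/2::real)^j < \<epsilon> / B" by (auto simp: eventually_sequentially)
    have Bj: "B * (1/2)^j \<le> \<epsilon>" using j B0 by (simp add: field_simps)
    let ?K = "Kc (mm j)"
    have all: "\<forall>k. \<exists>D. D \<subseteq> induced_edges ?E (Fn k) \<and> real (card D) \<le> \<epsilon> * real (card (Fn k)) \<and>
            (\<forall>v\<in>Fn k. card (component (induced_edges ?E (Fn k) - D) v) \<le> ?K)"
    proof
      fix k
      let ?n = "nn (r k)"
      let ?D = "Dcut (mm j) ?K x (Fn k)"
      let ?c = "card (Fn k)"
      have D1: "of_nat (card ?D) \<le> (\<Sum>y\<in>Fn k. H (mm j) y)"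
        using D_enn[OF x, of "mm j" ?n] by (simp add: Fn_def)
      have "ennreal (2^j) * (\<Sum>y\<in>Fn k. H (mm j) y) = (\<Sum>y\<in>Fn k. ennreal (2^j) * H (mm j) y)"
        by (simp add: sum_distrib_left)
      also have "\<dots> \<le> (\<Sum>y\<in>Fn k. Gf y)" by (rule sum_mono) (rule Gf_ge)
      also have "\<dots> = of_nat ?c * T ?n Gf x" unfolding Fn_def by (rule sum_class[OF x])
      also have "\<dots> \<le> of_nat ?c * ennreal B" by (rule mult_left_mono) (use TB in auto)
      finally have "ennreal (2^j) * of_nat (card ?D) \<le> of_nat ?c * ennreal B"
        using D1 by (meson mult_left_mono order_trans zero_le)
      then have "ennreal (2^j * real (card ?D)) \<le> ennreal (real ?c * B)"
        using B0 by (simp add: ennreal_of_nat_eq_real_of_nat ennreal_mult)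
      then have le2: "2^j * real (card ?D) \<le> real ?c * B"
        using B0 by (subst (asm) ennreal_le_iff) auto
      have "real (card ?D) = (1/2)^j * (2^j * real (card ?D))" by (simp add: power_one_over)
      also have "\<dots> \<le> (1/2)^j * (real ?c * B)" by (rule mult_left_mono[OF le2]) simp
      also have "\<dots> = real ?c * (B * (1/2)^j)" by simp
      also have "\<dots> \<le> real ?c * \<epsilon>" by (rule mult_left_mono[OF Bj]) simp
      finally have cardD: "real (card ?D) \<le> \<epsilon> * real ?c" by (simp only: mult.commute)
      have comp: "\<forall>v\<in>Fn k. card (component (induced_edges ?E (Fn k) - ?D) v) \<le> ?K"
        using Dcut_comp[OF x Kc(1), of _ ?n "mm j"] by (simp add: Fn_def)
      show "\<exists>D. D \<subseteq> induced_edges ?E (Fn k) \<and> real (card D) \<le> \<epsilon> * real (card (Fn k)) \<and>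
            (\<forall>v\<in>Fn k. card (component (induced_edges ?E (Fn k) - D) v) \<le> ?K)"
        using Dcut_sub cardD comp by blast
    qed
    then show "\<exists>K. \<forall>k. \<exists>D\<subseteq>induced_edges ?E (Fn k). real (card D) \<le> \<epsilon> * real (card (Fn k)) \<and>
            (\<forall>v\<in>Fn k. card (component (induced_edges ?E (Fn k) - D) v) \<le> K)" by blast
  qed
  show ?thesis unfolding has_hyperfinite_folner_def using folner hyp by blast
qed


lemma main_AE: "AE z in M. has_hyperfinite_folner S act (orbit G act z)"
proof -
  have "AE z in M. z \<in> Z0 \<and> (\<Sum>i. T (nn i) (cE (nn i)) z) \<noteq> \<infinity> \<and> liminf (\<lambda>i. T (nn i) Gf z) \<noteq> \<infinity>"
    using AE_Z0 AE_sum_fin AE_liminf_fin by (intro AE_conjI)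
  then show ?thesis by (rule eventually_mono) (use main_point in blast)
qed

end

theorem proposition4p6:
  fixes G :: "('g, 'b) monoid_scheme"
    and S :: "'g set"
    and \<mu> :: "'z::polish_space measure"
    and act :: "'g \<Rightarrow> 'z \<Rightarrow> 'z"
  assumes "group G"
    and "finite S" and "S \<subseteq> carrier G"
    and "\<forall>s\<in>S. inv\<^bsub>G\<^esub> s \<in> S"
    and "generate G S = carrier G"
    and "prob_space \<mu>" and "sets \<mu> = sets borel"
    and "pmp_action G \<mu> act"
    and "hyperfinite_action G \<mu> act"
  shows "AE z in \<mu>. has_hyperfinite_folner S act (orbit G act z)"
proof -
  obtain N F where N: "N \<in> null_sets \<mu>" and F1: "\<forall>n. finite_measurable_equiv \<mu> (F n)"
    and F2: "\<forall>n. F n \<subseteq> F (Suc n)"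
    and F3: "\<forall>x\<in>space \<mu> - N. \<forall>y\<in>space \<mu> - N. (x, y) \<in> orbit_rel G \<mu> act \<longleftrightarrow> (\<exists>n. (x, y) \<in> F n)"
    using assms(9) unfolding hyperfinite_action_def by blast
  have cG: "countable (carrier G)"
    using generate_countable[of S G] assms(2,5) by (simp add: countable_finite)
  have ne: "carrier G \<noteq> {}" using assms(1) by (auto dest: group.is_monoid monoid.one_closed)
  define gg where "gg = from_nat_into (carrier G)"
  have enum: "range gg = carrier G" unfolding gg_def using range_from_nat_into[OF ne cG] .
  have "hf G S \<mu> act gg N F"
    unfolding hf_def
  proof (intro conjI allI)
    show "group G" "finite S" "S \<subseteq> carrier G" "\<forall>s\<in>S. inv\<^bsub>G\<^esub> s \<in> S" "prob_space \<mu>"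
      "sets \<mu> = sets borel" "pmp_action G \<mu> act" using assms by simp_all
    show "range gg = carrier G" by (rule enum)
    show "N \<in> null_sets \<mu>" by (rule N)
    show "\<And>n. finite_measurable_equiv \<mu> (F n)" using F1 by blast
    show "\<And>n. F n \<subseteq> F (Suc n)" using F2 by blast
    show "\<forall>x\<in>space \<mu> - N. \<forall>y\<in>space \<mu> - N. (x, y) \<in> orbit_rel G \<mu> act \<longleftrightarrow> (\<exists>n. (x, y) \<in> F n)"
      by (rule F3)
  qed
  then show ?thesis by (rule hf.main_AE)
qed

end
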